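(* Let $m\ge 2$, $k\ge 2$, $n=km$, and let $O$ be an $n\times m$ sequence design. (a) If $X$ is an $n\times m$ LHD such that $D=(X,O)$ is marginally coupled, then, after some permutation of its rows, $O=(O_1^{T},\ldots,O_k^{T})^{T}$ where each $O_i$ is an $m\times m$ Latin square. (b) Conversely, if after some row permutation $O=(O_1^{T},\ldots,O_k^{T})^{T}$ with each $O_i$ an $m\times m$ Latin square, then there exists an $n\times m$ LHD $X$ such that $(X,O)$ is marginally coupled.
   Context: A sequence design is a matrix each of whose rows is a permutation of $\{1,\ldots,m\}$. An $n\times m$ LHD is a matrix each of whose columns is a permutation of $\{1,\ldots,n\}$. An $m\times m$ Latin square is a matrix each of whose rows and columns is a permutation of $\{1,\ldots,m\}$. For $n=km$, the QS design $D=(X,O)$ (same row indexing) is marginally coupled if $X$ is an LHD and for every column $u$ of $O$, every component $c\in\{1,\ldots,m\}$, and every column $j$ of $X$, the multiset $\{\lfloor (X_{rj}-1)/m\rfloor : O_{ru}=c\}$ equals $\{0,1,\ldots,k-1\}$ (each value exactly once); i.e., for each level of each factor in $O$ the corresponding points of $X$ form a small LHD after collapsing the $n$ levels to $k$ levels. *)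

theory Defs
  imports Main "HOL-Library.Multiset"
begin

text \<open>Matrices are functions nat => nat => nat; row indices 0..<rows,
  column indices 0..<cols; entries are 1-based levels.\<close>

definition sequence_design :: "nat \<Rightarrow> nat \<Rightarrow> (nat \<Rightarrow> nat \<Rightarrow> nat) \<Rightarrow> bool" where
  "sequence_design n m Q \<longleftrightarrow> (\<forall>r<n. bij_betw (\<lambda>j. Q r j) {0..<m} {1..m})"

definition LHD :: "nat \<Rightarrow> nat \<Rightarrow> (nat \<Rightarrow> nat \<Rightarrow> nat) \<Rightarrow> bool" where
  "LHD n m X \<longleftrightarrow> (\<forall>j<m. bij_betw (\<lambda>r. X r j) {0..<n} {1..n})"

definition latin_square :: "nat \<Rightarrow> (nat \<Rightarrow> nat \<Rightarrow> nat) \<Rightarrow> bool" where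
  "latin_square m L \<longleftrightarrow>
     (\<forall>r<m. bij_betw (\<lambda>j. L r j) {0..<m} {1..m}) \<and>
     (\<forall>j<m. bij_betw (\<lambda>r. L r j) {0..<m} {1..m})"

definition marginally_coupled ::
  "nat \<Rightarrow> nat \<Rightarrow> (nat \<Rightarrow> nat \<Rightarrow> nat) \<Rightarrow> (nat \<Rightarrow> nat \<Rightarrow> nat) \<Rightarrow> bool" where
  "marginally_coupled k m X Q \<longleftrightarrow>
     LHD (k * m) m X \<and>
     (\<forall>u<m. \<forall>c\<in>{1..m}. \<forall>j<m.
        image_mset (\<lambda>r. (X r j - 1) div m) (mset_set {r\<in>{0..<k * m}. Q r u = c})
          = mset_set {0..<k})"

definition stacked_latin :: "nat \<Rightarrow> nat \<Rightarrow> (nat \<Rightarrow> nat \<Rightarrow> nat) \<Rightarrow> bool" where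
  "stacked_latin k m Q \<longleftrightarrow>
     (\<exists>\<sigma>. bij_betw \<sigma> {0..<k * m} {0..<k * m} \<and>
          (\<forall>i<k. latin_square m (\<lambda>a b. Q (\<sigma> (i * m + a)) b)))"

end

theory Submission
  imports Defs
begin

lemma suc_bij: "bij_betw (\<lambda>p::nat. p + 1) {0..<n} {1..n}"
proof -
  have "(\<lambda>p::nat. p + 1) ` {0..<n} = {1..n}"
  proof
    show "(\<lambda>p::nat. p + 1) ` {0..<n} \<subseteq> {1..n}" by auto
    show "{1..n} \<subseteq> (\<lambda>p::nat. p + 1) ` {0..<n}"
    proof
      fix x assume x: "x \<in> {1..n}"
      then have "x = (x - 1) + 1" "x - 1 \<in> {0..<n}" by auto
      then show "x \<in> (\<lambda>p::nat. p + 1) ` {0..<n}" by (rule image_eqI)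
    qed
  qed
  then show ?thesis by (simp add: bij_betw_def inj_on_def)
qed

lemma mset_inj:
  assumes "finite A" "image_mset f (mset_set A) = mset_set (B::nat set)" "finite B"
  shows "inj_on f A" "f ` A = B" "card A = card B"
proof -
  have "set_mset (image_mset f (mset_set A)) = set_mset (mset_set B)" using assms(2) by simp
  then have s: "f ` A = B" using assms(1,3) by simp
  have c: "card A = card B" using arg_cong[OF assms(2), of size] by simp
  show "f ` A = B" by (rule s)
  show "card A = card B" by (rule c)
  show "inj_on f A" using s c assms(1) by (intro eq_card_imp_inj_on) auto
qed

lemma divmod_block: "a < (m::nat) \<Longrightarrow> (i*m+a) div m = i"
  by simp

lemma partA:
  fixes m k n :: nat and Q X :: "nat \<Rightarrow> nat \<Rightarrow> nat"
  assumes m: "m \<ge> 2" and n: "n = k * m"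
    and sd: "sequence_design n m Q" and L: "LHD n m X" and mc: "marginally_coupled k m X Q"
  shows "stacked_latin k m Q"
proof -
  have b0: "bij_betw (\<lambda>r. X r 0) {0..<n} {1..n}" using L m unfolding LHD_def by auto
  define \<sigma> where "\<sigma> p = inv_into {0..<n} (\<lambda>r. X r 0) (p+1)" for p
  have bs: "bij_betw \<sigma> {0..<n} {0..<n}"
    unfolding \<sigma>_def using bij_betw_trans[OF suc_bij bij_betw_inv_into[OF b0]]
    by (simp add: o_def)
  have Xs: "X (\<sigma> p) 0 = p + 1" if "p < n" for p
    unfolding \<sigma>_def using bij_betw_inv_into_right[OF b0, of "p+1"] that by auto
  have sl: "\<sigma> p < n" if "p < n" for p using bs that by (auto dest: bij_betwE)
  have injs: "inj_on \<sigma> {0..<n}" using bs bij_betw_def by blast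
  show ?thesis unfolding stacked_latin_def
  proof (intro exI conjI allI impI)
    show "bij_betw \<sigma> {0..<k * m} {0..<k * m}" using bs n by simp
    fix i assume i: "i < k"
    have pos: "i*m + a < n" if "a < m" for a
    proof -
      have "i*m + a < i*m + m" using that by simp
      also have "\<dots> = (i+1)*m" by simp
      also have "\<dots> \<le> k*m" using i by (intro mult_right_mono) auto
      finally show ?thesis using n by simp
    qed
    show "latin_square m (\<lambda>a b. Q (\<sigma> (i * m + a)) b)"
      unfolding latin_square_def
    proof (intro conjI allI impI)
      fix a assume a: "a < m"
      show "bij_betw (\<lambda>j. Q (\<sigma> (i * m + a)) j) {0..<m} {1..m}"
        using sd sl[OF pos[OF a]] unfolding sequence_design_def by auto
    next
      fix j assume j: "j < m"
      have inj: "inj_on (\<lambda>a. Q (\<sigma> (i * m + a)) j) {0..<m}"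
      proof (rule inj_onI)
        fix a b assume a: "a \<in> {0..<m}" and b: "b \<in> {0..<m}"
          and eq: "Q (\<sigma> (i * m + a)) j = Q (\<sigma> (i * m + b)) j"
        define c where "c = Q (\<sigma> (i * m + a)) j"
        have "bij_betw (\<lambda>j. Q (\<sigma> (i * m + a)) j) {0..<m} {1..m}"
          using sd sl[OF pos] a unfolding sequence_design_def by auto
        then have c: "c \<in> {1..m}" unfolding c_def
          using j by (auto dest: bij_betwE)
        define R where "R = {r\<in>{0..<k * m}. Q r j = c}"
        have hm: "image_mset (\<lambda>r. (X r 0 - 1) div m) (mset_set R) = mset_set {0..<k}"
          using mc c j m unfolding marginally_coupled_def R_def by auto
        have ij: "inj_on (\<lambda>r. (X r 0 - 1) div m) R"
          using mset_inj(1)[OF _ hm] by (simp add: R_def)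
        have ra: "\<sigma> (i*m+a) \<in> R" "\<sigma> (i*m+b) \<in> R"
          using sl[OF pos] a b eq n unfolding R_def c_def by auto
        have "(X (\<sigma> (i*m+a)) 0 - 1) div m = i" "(X (\<sigma> (i*m+b)) 0 - 1) div m = i"
          using Xs[OF pos] a b by auto
        then have "\<sigma> (i*m+a) = \<sigma> (i*m+b)" using ij ra by (metis inj_onD)
        then have "i*m+a = i*m+b" using injs pos a b by (auto dest: inj_onD)
        then show "a = b" by simp
      qed
      have img: "(\<lambda>a. Q (\<sigma> (i * m + a)) j) ` {0..<m} \<subseteq> {1..m}"
      proof
        fix x assume "x \<in> (\<lambda>a. Q (\<sigma> (i * m + a)) j) ` {0..<m}"
        then obtain a where a: "a < m" and x: "x = Q (\<sigma> (i * m + a)) j" by auto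
        have "bij_betw (\<lambda>j. Q (\<sigma> (i * m + a)) j) {0..<m} {1..m}"
          using sd sl[OF pos] a unfolding sequence_design_def by auto
        then show "x \<in> {1..m}" using x j by (auto dest: bij_betwE)
      qed
      have "(\<lambda>a. Q (\<sigma> (i * m + a)) j) ` {0..<m} = {1..m}"
        using card_image[OF inj] img by (intro card_subset_eq) auto
      then show "bij_betw (\<lambda>a. Q (\<sigma> (i * m + a)) j) {0..<m} {1..m}"
        using inj by (simp add: bij_betw_def)
    qed
  qed
qed

lemma partB:
  fixes m k n :: nat and Q :: "nat \<Rightarrow> nat \<Rightarrow> nat"
  assumes m: "m \<ge> 2" and n: "n = k * m" and st: "stacked_latin k m Q"
  shows "\<exists>X. LHD n m X \<and> marginally_coupled k m X Q"
proof -
  obtain \<sigma> where bs: "bij_betw \<sigma> {0..<n} {0..<n}"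
    and lat: "\<And>i. i < k \<Longrightarrow> latin_square m (\<lambda>a b. Q (\<sigma> (i * m + a)) b)"
    using st n unfolding stacked_latin_def by auto
  define \<tau> where "\<tau> = inv_into {0..<n} \<sigma>"
  have bt: "bij_betw \<tau> {0..<n} {0..<n}" unfolding \<tau>_def by (rule bij_betw_inv_into[OF bs])
  define X where "X r j = \<tau> r + 1" for r j :: nat
  have LX: "LHD n m X" unfolding LHD_def X_def
    using bij_betw_trans[OF bt suc_bij] by (simp add: o_def)
  have st1: "\<tau> (\<sigma> p) = p" if "p < n" for p
    unfolding \<tau>_def using bij_betw_inv_into_left[OF bs] that by auto
  have st2: "\<sigma> (\<tau> r) = r" if "r < n" for r
    unfolding \<tau>_def using bij_betw_inv_into_right[OF bs] that by auto
  have tl: "\<tau> r < n" if "r < n" for r using bt that by (auto dest: bij_betwE)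
  have sl: "\<sigma> p < n" if "p < n" for p using bs that by (auto dest: bij_betwE)
  have pos: "i*m + a < n" if "a < m" "i < k" for a i
  proof -
    have "i*m + a < i*m + m" using that by simp
    also have "\<dots> = (i+1)*m" by simp
    also have "\<dots> \<le> k*m" using that by (intro mult_right_mono) auto
    finally show ?thesis using n by simp
  qed
  have mc: "marginally_coupled k m X Q"
    unfolding marginally_coupled_def
  proof (intro conjI ballI allI impI)
    show "LHD (k * m) m X" using LX n by simp
    fix u c j assume u: "u < m" and c: "c \<in> {1..m}" and j: "j < m"
    define R where "R = {r\<in>{0..<k * m}. Q r u = c}"
    define f where "f r = \<tau> r div m" for r
    have fe: "(\<lambda>r. (X r j - 1) div m) = f" unfolding f_def X_def by auto
    have col: "bij_betw (\<lambda>a. Q (\<sigma> (i * m + a)) u) {0..<m} {1..m}" if "i < k" for i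
      using lat[OF that] u unfolding latin_square_def by auto
    have dec: "\<sigma> (f r * m + \<tau> r mod m) = r" if "r < n" for r
      unfolding f_def using st2[OF that] by simp
    have injf: "inj_on f R"
    proof (rule inj_onI)
      fix r1 r2 assume r1: "r1 \<in> R" and r2: "r2 \<in> R" and e: "f r1 = f r2"
      have rn: "r1 < n" "r2 < n" using r1 r2 n unfolding R_def by auto
      have fk: "f r1 < k" unfolding f_def using tl[OF rn(1)] n m
        by (simp add: less_mult_imp_div_less)
      have eqq: "(\<lambda>a. Q (\<sigma> (f r1 * m + a)) u) (\<tau> r1 mod m) = (\<lambda>a. Q (\<sigma> (f r1 * m + a)) u) (\<tau> r2 mod m)"
        using dec[OF rn(1)] dec[OF rn(2)] e r1 r2 unfolding R_def by auto
      have ii: "inj_on (\<lambda>a. Q (\<sigma> (f r1 * m + a)) u) {0..<m}"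
        using col[OF fk] unfolding bij_betw_def by blast
      have mem: "\<tau> r1 mod m \<in> {0..<m}" "\<tau> r2 mod m \<in> {0..<m}" using m by auto
      have mm: "\<tau> r1 mod m = \<tau> r2 mod m"
        by (rule inj_onD[OF ii eqq mem])
      have "\<sigma> (f r1 * m + \<tau> r1 mod m) = \<sigma> (f r2 * m + \<tau> r2 mod m)" using e mm by simp
      then show "r1 = r2" by (simp only: dec[OF rn(1)] dec[OF rn(2)])
    qed
    have imf: "f ` R = {0..<k}"
    proof
      show "f ` R \<subseteq> {0..<k}" unfolding f_def R_def using tl n m
        by (auto simp: less_mult_imp_div_less)
      show "{0..<k} \<subseteq> f ` R"
      proof
        fix i assume i: "i \<in> {0..<k}"
        then have "bij_betw (\<lambda>a. Q (\<sigma> (i * m + a)) u) {0..<m} {1..m}" using col by simp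
        then have "(\<lambda>a. Q (\<sigma> (i * m + a)) u) ` {0..<m} = {1..m}" by (simp add: bij_betw_def)
        then have "c \<in> (\<lambda>a. Q (\<sigma> (i * m + a)) u) ` {0..<m}" using c by simp
        then obtain a where a: "a < m" "Q (\<sigma> (i * m + a)) u = c" by auto
        have "\<sigma> (i*m+a) \<in> R" unfolding R_def using sl[OF pos[OF a(1)]] i a n by auto
        moreover have "f (\<sigma> (i*m+a)) = i" unfolding f_def
          using st1[OF pos[OF a(1)]] i a by auto
        ultimately show "i \<in> f ` R" by force
      qed
    qed
    show "image_mset (\<lambda>r. (X r j - 1) div m) (mset_set {r \<in> {0..<k * m}. Q r u = c}) = mset_set {0..<k}"
      unfolding fe R_def[symmetric] using image_mset_mset_set[OF injf] imf by simp
  qed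
  show ?thesis using LX mc by blast
qed

theorem lemma4:
  fixes m k n :: nat and Q :: "nat \<Rightarrow> nat \<Rightarrow> nat"
  assumes "m \<ge> 2" and "k \<ge> 2" and "n = k * m"
    and "sequence_design n m Q"
  shows "(\<forall>X. LHD n m X \<and> marginally_coupled k m X Q \<longrightarrow> stacked_latin k m Q)
       \<and> (stacked_latin k m Q \<longrightarrow> (\<exists>X. LHD n m X \<and> marginally_coupled k m X Q))"
proof (intro conjI allI impI)
  fix X assume "LHD n m X \<and> marginally_coupled k m X Q"
  then have "LHD n m X" "marginally_coupled k m X Q" by auto
  then show "stacked_latin k m Q" by (rule partA[OF assms(1,3,4)])
next
  assume "stacked_latin k m Q"
  then show "\<exists>X. LHD n m X \<and> marginally_coupled k m X Q" by (rule partB[OF assms(1,3)])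
qed

end
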